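(* Let $b>1$ and consider on $M_h$ with $2h=1$ the reduced prolate integrable system $(\ell_{23},G_{pro})$, where $G_{pro}=b\ell_{12}^2+b\ell_{13}^2+\ell_{14}^2$. The image of the momentum map $(\ell_{23},G_{pro}):M_h\to\mathbb R^2$ is the region bounded by the curve $\mathcal P_1: G_{pro}=b(1-\ell_{23}^2)$ and the line $\mathcal P_2: G_{pro}=0$. There is an isolated critical value at $(\ell_{23},G_{pro})=(0,1)$.
   Context: $\mathbf L=(\ell_{12},\ell_{13},\ell_{14},\ell_{23},\ell_{24},\ell_{34})\in\mathbb R^6\cong\mathfrak{so}(4)^*$ with the Lie–Poisson bracket of $\mathfrak{so}(4)$ (extending $\ell_{ji}=-\ell_{ij}$: $\{\ell_{ij},\ell_{jk}\}=-\ell_{ik}$ for distinct $i,j,k$, and $\{\ell_{ij},\ell_{kl}\}=0$ when $\{i,j\}\cap\{k,l\}=\emptyset$); equivalently $\ell_{ij}=x_iy_j-x_jy_i$ with canonical bracket on $T^*\mathbb R^4$. $M_h=\{\mathbf L:\sum_{i<j}\ell_{ij}^2=2h,\ \ell_{12}\ell_{34}-\ell_{13}\ell_{24}+\ell_{14}\ell_{23}=0\}\cong S^2\times S^2$ is a symplectic leaf. This system arises from separating the geodesic flow on $S^3$ in prolate coordinates (ellipsoidal parameters $(0,1,1,b)$). *)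

theory Defs
  imports "HOL-Analysis.Analysis"
begin

text \<open>A point L of so(4)* = R^6, coordinates ordered
  (l12, l13, l14, l23, l24, l34) as components 1..6 of a vector in real^6.\<close>

type_synonym so4 = "real ^ 6"

definition l12 :: "so4 \<Rightarrow> real" where "l12 L = L $ 1"
definition l13 :: "so4 \<Rightarrow> real" where "l13 L = L $ 2"
definition l14 :: "so4 \<Rightarrow> real" where "l14 L = L $ 3"
definition l23 :: "so4 \<Rightarrow> real" where "l23 L = L $ 4"
definition l24 :: "so4 \<Rightarrow> real" where "l24 L = L $ 5"
definition l34 :: "so4 \<Rightarrow> real" where "l34 L = L $ 6"

definition casimir_norm :: "so4 \<Rightarrow> real" where
  "casimir_norm L = (l12 L)^2 + (l13 L)^2 + (l14 L)^2 + (l23 L)^2 + (l24 L)^2 + (l34 L)^2"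

definition casimir_pf :: "so4 \<Rightarrow> real" where
  "casimir_pf L = l12 L * l34 L - l13 L * l24 L + l14 L * l23 L"

definition Mh :: "real \<Rightarrow> so4 set" where
  "Mh h = {L. casimir_norm L = 2 * h \<and> casimir_pf L = 0}"

definition Gpro :: "real \<Rightarrow> so4 \<Rightarrow> real" where
  "Gpro b L = b * (l12 L)^2 + b * (l13 L)^2 + (l14 L)^2"

definition momentum :: "real \<Rightarrow> so4 \<Rightarrow> real \<times> real" where
  "momentum b L = (l23 L, Gpro b L)"

text \<open>Tangent space of M_h at p (M_h is the regular common level set of the
  two Casimirs; the level value does not enter).\<close>
definition tangent_space :: "so4 \<Rightarrow> so4 set" where
  "tangent_space p = {v. frechet_derivative casimir_norm (at p) v = 0
                        \<and> frechet_derivative casimir_pf (at p) v = 0}"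

definition critical_point :: "real \<Rightarrow> real \<Rightarrow> so4 \<Rightarrow> bool" where
  "critical_point b h p \<longleftrightarrow> p \<in> Mh h \<and>
     frechet_derivative (momentum b) (at p) ` tangent_space p \<noteq> UNIV"

definition critical_value :: "real \<Rightarrow> real \<Rightarrow> real \<times> real \<Rightarrow> bool" where
  "critical_value b h c \<longleftrightarrow> (\<exists>p. critical_point b h p \<and> momentum b p = c)"

definition isolated_critical_value :: "real \<Rightarrow> real \<Rightarrow> real \<times> real \<Rightarrow> bool" where
  "isolated_critical_value b h c \<longleftrightarrow> critical_value b h c \<and>
     (\<exists>e>0. \<forall>c'. c' \<noteq> c \<and> dist c' c < e \<longrightarrow> \<not> critical_value b h c')"

end

theory Submission
  imports Defs
begin


lemma hd_nth: "((\<lambda>x::so4. x $ i) has_derivative (\<lambda>v. v $ i)) F"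
  by (rule bounded_linear_imp_has_derivative) (rule bounded_linear_vec_nth)

lemma hd_norm: "(casimir_norm has_derivative
   (\<lambda>v. 2*(p$1 * v$1 + p$2 * v$2 + p$3 * v$3 + p$4 * v$4 + p$5 * v$5 + p$6 * v$6))) (at p)"
  unfolding casimir_norm_def[abs_def] l12_def l13_def l14_def l23_def l24_def l34_def
  by (rule derivative_eq_intros hd_nth refl | simp)+  (simp add: algebra_simps)

lemma hd_pf: "(casimir_pf has_derivative
   (\<lambda>v. p$6 * v$1 - p$5 * v$2 + p$4 * v$3 + p$3 * v$4 - p$2 * v$5 + p$1 * v$6)) (at p)"
  unfolding casimir_pf_def[abs_def] l12_def l13_def l14_def l23_def l24_def l34_def
  by (rule derivative_eq_intros hd_nth refl | simp)+  (simp add: algebra_simps)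

lemma hd_mom: "(momentum b has_derivative
   (\<lambda>v. (v$4, 2*b*p$1 * v$1 + 2*b*p$2 * v$2 + 2*p$3 * v$3))) (at p)"
  unfolding momentum_def[abs_def] Gpro_def l12_def l13_def l14_def l23_def l24_def l34_def
  by (rule derivative_eq_intros hd_nth refl | simp)+  (simp add: algebra_simps)


lemma lagrange:
  fixes a1 a2 a3 a4 a5 a6 \<alpha> \<beta> b :: real
  assumes N: "a1^2+a2^2+a3^2+a4^2+a5^2+a6^2 = 1"
    and P: "a1*a6 - a2*a5 + a3*a4 = 0"
    and H: "\<And>v1 v2 v3 v4 v5 v6. a1* v1+a2* v2+a3* v3+a4* v4+a5* v5+a6* v6 = 0 \<Longrightarrow>
             a6* v1 - a5* v2 + a4* v3 + a3* v4 - a2* v5 + a1* v6 = 0 \<Longrightarrow>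
             \<alpha>* v4 + \<beta>*(2*b*a1* v1 + 2*b*a2* v2 + 2*a3* v3) = 0"
  defines "\<mu> \<equiv> 2*b*\<beta>*a1^2 + 2*b*\<beta>*a2^2 + 2*\<beta>*a3^2 + \<alpha>*a4"
    and "\<nu> \<equiv> 2*b*\<beta>*a1*a6 - 2*b*\<beta>*a2*a5 + 2*\<beta>*a3*a4 + \<alpha>*a3"
  shows "2*b*\<beta>*a1 = \<mu>*a1 + \<nu>*a6" "2*b*\<beta>*a2 = \<mu>*a2 - \<nu>*a5"
        "2*\<beta>*a3 = \<mu>*a3 + \<nu>*a4" "\<alpha> = \<mu>*a4 + \<nu>*a3"
        "0 = \<mu>*a5 - \<nu>*a2" "0 = \<mu>*a6 + \<nu>*a1"
proof -
  have h: "\<alpha>* v4 + \<beta>*(2*b*a1* v1 + 2*b*a2* v2 + 2*a3* v3) = 0"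
    if "v1 = dA - c*a1 - s*a6" "v2 = dB - c*a2 + s*a5" "v3 = dC - c*a3 - s*a4"
       "v4 = dD - c*a4 - s*a3" "v5 = dE - c*a5 + s*a2" "v6 = dF - c*a6 - s*a1"
       "c = a1*dA+a2*dB+a3*dC+a4*dD+a5*dE+a6*dF"
       "s = a6*dA - a5*dB + a4*dC + a3*dD - a2*dE + a1*dF"
    for v1 v2 v3 v4 v5 v6 dA dB dC dD dE dF c s
  proof (rule H)
    show "a1* v1+a2* v2+a3* v3+a4* v4+a5* v5+a6* v6 = 0"
      using that N P by algebra
    show "a6* v1 - a5* v2 + a4* v3 + a3* v4 - a2* v5 + a1* v6 = 0"
      using that N P by algebra
  qed
  show "2*b*\<beta>*a1 = \<mu>*a1 + \<nu>*a6"
    using h[where dA=1 and dB=0 and dC=0 and dD=0 and dE=0 and dF=0, OF refl refl refl refl refl refl refl refl] unfolding \<mu>_def \<nu>_def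
    by algebra
  show "2*b*\<beta>*a2 = \<mu>*a2 - \<nu>*a5"
    using h[where dA=0 and dB=1 and dC=0 and dD=0 and dE=0 and dF=0, OF refl refl refl refl refl refl refl refl] unfolding \<mu>_def \<nu>_def
    by algebra
  show "2*\<beta>*a3 = \<mu>*a3 + \<nu>*a4"
    using h[where dA=0 and dB=0 and dC=1 and dD=0 and dE=0 and dF=0, OF refl refl refl refl refl refl refl refl] unfolding \<mu>_def \<nu>_def
    by algebra
  show "\<alpha> = \<mu>*a4 + \<nu>*a3"
    using h[where dA=0 and dB=0 and dC=0 and dD=1 and dE=0 and dF=0, OF refl refl refl refl refl refl refl refl] unfolding \<mu>_def \<nu>_def
    by algebra
  show "0 = \<mu>*a5 - \<nu>*a2"
    using h[where dA=0 and dB=0 and dC=0 and dD=0 and dE=1 and dF=0, OF refl refl refl refl refl refl refl refl] unfolding \<mu>_def \<nu>_def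
    by algebra
  show "0 = \<mu>*a6 + \<nu>*a1"
    using h[where dA=0 and dB=0 and dC=0 and dD=0 and dE=0 and dF=1, OF refl refl refl refl refl refl refl refl] unfolding \<mu>_def \<nu>_def
    by algebra
qed


lemma crit_cases:
  fixes a1 a2 a3 a4 a5 a6 \<alpha> \<beta> \<mu> \<nu> b :: real
  assumes b: "b > 1"
    and N: "a1^2+a2^2+a3^2+a4^2+a5^2+a6^2 = 1"
    and P: "a1*a6 - a2*a5 + a3*a4 = 0"
    and nz: "(\<alpha>, \<beta>) \<noteq> (0, 0)"
    and E1: "2*b*\<beta>*a1 = \<mu>*a1 + \<nu>*a6" and E2: "2*b*\<beta>*a2 = \<mu>*a2 - \<nu>*a5"
    and E3: "2*\<beta>*a3 = \<mu>*a3 + \<nu>*a4" and E4: "\<alpha> = \<mu>*a4 + \<nu>*a3"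
    and E5: "0 = \<mu>*a5 - \<nu>*a2" and E6: "0 = \<mu>*a6 + \<nu>*a1"
  shows "(a4 = 0 \<and> b*a1^2+b*a2^2+a3^2 = 1) \<or> b*a1^2+b*a2^2+a3^2 = 0
         \<or> b*a1^2+b*a2^2+a3^2 = b*(1-a4^2)"
proof -
  define D where "D = (2*b*\<beta> - \<mu>)*\<mu> + \<nu>^2"
  show ?thesis
  proof (cases "D = 0")
    case False
    have "a1*D = \<mu>*(2*b*\<beta>*a1 - \<mu>*a1 - \<nu>*a6) + \<nu>*(\<mu>*a6 + \<nu>*a1)"
      unfolding D_def by algebra
    with E1 E6 False have 1: "a1 = 0" by simp
    have "a2*D = \<mu>*(2*b*\<beta>*a2 - \<mu>*a2 + \<nu>*a5) - \<nu>*(\<mu>*a5 - \<nu>*a2)"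
      unfolding D_def by algebra
    with E2 E5 False have 2: "a2 = 0" by simp
    have "a5*D = (2*b*\<beta> - \<mu>)*(\<mu>*a5 - \<nu>*a2) + \<nu>*(2*b*\<beta>*a2 - \<mu>*a2 + \<nu>*a5)"
      unfolding D_def by algebra
    with E2 E5 False have 5: "a5 = 0" by simp
    have "a6*D = (2*b*\<beta> - \<mu>)*(\<mu>*a6 + \<nu>*a1) - \<nu>*(2*b*\<beta>*a1 - \<mu>*a1 - \<nu>*a6)"
      unfolding D_def by algebra
    with E1 E6 False have 6: "a6 = 0" by simp
    from P 1 2 5 6 have "a3*a4 = 0" by simp
    moreover from N 1 2 5 6 have "a3^2 + a4^2 = 1" by simp
    ultimately show ?thesis using 1 2 by auto
  next
    case D0: True
    show ?thesis
    proof (cases "\<nu> = 0")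
      case nu0: True
      with D0 have "(2*b*\<beta> - \<mu>)*\<mu> = 0" unfolding D_def by simp
      then consider "\<mu> = 0" | "\<mu> = 2*b*\<beta>" "\<mu> \<noteq> 0" by force
      then show ?thesis
      proof cases
        case 1
        with E4 nu0 have "\<alpha> = 0" by simp
        with nz have bn: "\<beta> \<noteq> 0" by simp
        from E1 E2 E3 1 nu0 bn b have "a1 = 0" "a2 = 0" "a3 = 0" by auto
        then show ?thesis by simp
      next
        case 2
        then have bn: "\<beta> \<noteq> 0" by auto
        from E5 E6 2 nu0 have 56: "a5 = 0" "a6 = 0" by auto
        from E3 2 nu0 have "2*\<beta>*(b-1)*a3 = 0" by (simp add: algebra_simps)
        with bn b have 3: "a3 = 0" by simp
        from N 56 3 have "a1^2+a2^2 = 1 - a4^2" by simp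
        then have "b*(a1^2+a2^2) = b*(1-a4^2)" by simp
        then show ?thesis using 3 by (simp add: distrib_left)
      qed
    next
      case nun: False
      have mun: "\<mu> \<noteq> 0"
      proof
        assume "\<mu> = 0"
        with D0 nun show False unfolding D_def by simp
      qed
      define r where "r = a1^2 + a2^2"
      have A: "\<mu>*a3*a4 = \<nu>*r"
      proof -
        have "\<mu>*(a1*a6 - a2*a5 + a3*a4) = a1*(\<mu>*a6 + \<nu>*a1) - a2*(\<mu>*a5 - \<nu>*a2) + \<mu>*a3*a4 - \<nu>*r"
          unfolding r_def by algebra
        with P E5 E6 show ?thesis by simp
      qed
      have C: "((1-b)*\<mu>^2 - \<nu>^2)*a3^2 = b*\<nu>^2*r"
        using A E3 D0 unfolding D_def by algebra
      have c0: "(1-b)*\<mu>^2 - \<nu>^2 < 0"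
      proof -
        have "(1-b)*\<mu>^2 \<le> 0" using b by (simp add: mult_nonpos_nonneg)
        moreover have "\<nu>^2 > 0" using nun by simp
        ultimately show ?thesis by linarith
      qed
      have "((1-b)*\<mu>^2 - \<nu>^2)*a3^2 \<le> 0" using c0 by (simp add: mult_nonpos_nonneg)
      moreover have "b*\<nu>^2*r \<ge> 0" using b unfolding r_def by simp
      ultimately have z1: "((1-b)*\<mu>^2 - \<nu>^2)*a3^2 = 0" and z2: "b*\<nu>^2*r = 0" using C by linarith+
      from z1 c0 have 3: "a3 = 0" by simp
      from z2 b nun have "r = 0" by simp
      then have 12: "a1 = 0" "a2 = 0" unfolding r_def by (simp_all add: add_nonneg_eq_0_iff)
      from E3 3 nun have 4: "a4 = 0" by simp
      from E5 E6 12 mun have 56: "a5 = 0" "a6 = 0" by simp_all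
      from N 12 3 4 56 show ?thesis by simp
    qed
  qed
qed

definition mk6 :: "real \<Rightarrow> real \<Rightarrow> real \<Rightarrow> real \<Rightarrow> real \<Rightarrow> real \<Rightarrow> so4" where
  "mk6 x1 x2 x3 x4 x5 x6 = (\<chi> i. if i = 1 then x1 else if i = 2 then x2 else if i = 3 then x3
     else if i = 4 then x4 else if i = 5 then x5 else x6)"

lemma mk6_nth[simp]:
  "mk6 x1 x2 x3 x4 x5 x6 $ 1 = x1" "mk6 x1 x2 x3 x4 x5 x6 $ 2 = x2"
  "mk6 x1 x2 x3 x4 x5 x6 $ 3 = x3" "mk6 x1 x2 x3 x4 x5 x6 $ 4 = x4"
  "mk6 x1 x2 x3 x4 x5 x6 $ 5 = x5" "mk6 x1 x2 x3 x4 x5 x6 $ 6 = x6"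
  by (simp_all add: mk6_def)

lemma tangent_eq: "tangent_space p = {v. 2*(p$1 * v$1 + p$2 * v$2 + p$3 * v$3 + p$4 * v$4 + p$5 * v$5 + p$6 * v$6) = 0
   \<and> p$6 * v$1 - p$5 * v$2 + p$4 * v$3 + p$3 * v$4 - p$2 * v$5 + p$1 * v$6 = 0}"
  unfolding tangent_space_def
  by (simp only: frechet_derivative_at[OF hd_norm[of p], symmetric] frechet_derivative_at[OF hd_pf[of p], symmetric])

lemma crit_vals:
  assumes b: "b > 1" and cp: "critical_point b (1/2) p"
  shows "(p$4 = 0 \<and> Gpro b p = 1) \<or> Gpro b p = 0 \<or> Gpro b p = b*(1-(p$4)^2)"
proof -
  let ?T = "tangent_space p"
  let ?DM = "frechet_derivative (momentum b) (at p)"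
  have Mh: "p \<in> Mh (1/2)" and nU: "?DM ` ?T \<noteq> UNIV" using cp unfolding critical_point_def by auto
  have N: "(p$1)^2+(p$2)^2+(p$3)^2+(p$4)^2+(p$5)^2+(p$6)^2 = 1"
    and P: "p$1 * p$6 - p$2 * p$5 + p$3 * p$4 = 0"
    using Mh unfolding Mh_def casimir_norm_def casimir_pf_def l12_def l13_def l14_def l23_def l24_def l34_def
    by auto
  have lin1: "linear (frechet_derivative casimir_norm (at p))"
    using has_derivative_linear[OF hd_norm[of p]] unfolding frechet_derivative_at[OF hd_norm[of p], symmetric] .
  have lin2: "linear (frechet_derivative casimir_pf (at p))"
    using has_derivative_linear[OF hd_pf[of p]] unfolding frechet_derivative_at[OF hd_pf[of p], symmetric] .
  have linM: "linear ?DM"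
    using has_derivative_linear[OF hd_mom[of b p]] unfolding frechet_derivative_at[OF hd_mom[of b p], symmetric] .
  have subT: "subspace ?T"
    unfolding subspace_def tangent_space_def
    using lin1 lin2 by (simp add: linear_add linear_scale linear_0)
  have spanS: "span (?DM ` ?T) = ?DM ` ?T"
    using span_linear_image[OF linM, of ?T] subT by (metis span_eq_iff)
  have "dim (?DM ` ?T) \<noteq> DIM(real \<times> real)"
    using dim_eq_full[of "?DM ` ?T"] spanS nU by simp
  moreover have "dim (?DM ` ?T) \<le> DIM(real \<times> real)" by (rule dim_subset_UNIV)
  ultimately have dimlt: "dim (?DM ` ?T) < DIM(real \<times> real)" by simp
  obtain x :: "real \<times> real" where x0: "x \<noteq> 0" and xo: "\<And>y. y \<in> span (?DM ` ?T) \<Longrightarrow> orthogonal x y"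
    using orthogonal_to_subspace_exists[OF dimlt] by blast
  obtain \<alpha> \<beta> where xab: "x = (\<alpha>, \<beta>)" by (cases x)
  have nz: "(\<alpha>, \<beta>) \<noteq> (0, 0)" using x0 xab by (simp add: zero_prod_def)
  have DMe: "?DM = (\<lambda>v. (v$4, 2*b*p$1 * v$1 + 2*b*p$2 * v$2 + 2*p$3 * v$3))"
    by (rule frechet_derivative_at[OF hd_mom[of b p], symmetric])
  have H: "\<alpha>* v4 + \<beta>*(2*b*(p$1)* v1 + 2*b*(p$2)* v2 + 2*(p$3)* v3) = 0"
    if h1: "(p$1)* v1+(p$2)* v2+(p$3)* v3+(p$4)* v4+(p$5)* v5+(p$6)* v6 = 0"
    and h2: "(p$6)* v1 - (p$5)* v2 + (p$4)* v3 + (p$3)* v4 - (p$2)* v5 + (p$1)* v6 = 0"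
    for v1 v2 v3 v4 v5 v6
  proof -
    have "mk6 v1 v2 v3 v4 v5 v6 \<in> ?T" unfolding tangent_eq using h1 h2 by simp
    then have "?DM (mk6 v1 v2 v3 v4 v5 v6) \<in> span (?DM ` ?T)" by (intro span_base imageI)
    from xo[OF this] show ?thesis unfolding xab DMe orthogonal_def by (simp add: algebra_simps)
  qed
  note L = lagrange[OF N P H]
  from crit_cases[OF b N P nz L] show ?thesis
    unfolding Gpro_def l12_def l13_def l14_def by simp
qed

theorem proposition4:
  fixes b :: real
  assumes "b > 1"
  shows "momentum b ` Mh (1/2) = {(x, g). 0 \<le> g \<and> g \<le> b * (1 - x^2)}
    \<and> isolated_critical_value b (1/2) (0, 1)"
proof (intro conjI)
  have b0: "b > 0" using assms by simp
  show "momentum b ` Mh (1/2) = {(x, g). 0 \<le> g \<and> g \<le> b * (1 - x^2)}"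
  proof
    show "momentum b ` Mh (1/2) \<subseteq> {(x, g). 0 \<le> g \<and> g \<le> b * (1 - x^2)}"
    proof (rule image_subsetI)
      fix p assume "p \<in> Mh (1/2)"
      then have N: "(p$1)^2+(p$2)^2+(p$3)^2+(p$4)^2+(p$5)^2+(p$6)^2 = 1"
        unfolding Mh_def casimir_norm_def l12_def l13_def l14_def l23_def l24_def l34_def by auto
      have g0: "0 \<le> b*(p$1)^2 + b*(p$2)^2 + (p$3)^2" using b0 by simp
      have "(p$3)^2 \<le> b*(p$3)^2" using assms by (simp add: mult_le_cancel_right1)
      moreover have "b*((p$5)^2 + (p$6)^2) \<ge> 0" using b0 by simp
      moreover have "1 - (p$4)^2 = (p$1)^2+(p$2)^2+(p$3)^2+((p$5)^2+(p$6)^2)" using N by simp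
      then have "b*(1 - (p$4)^2) = b*(p$1)^2+b*(p$2)^2+b*(p$3)^2+b*((p$5)^2+(p$6)^2)"
        by (simp add: distrib_left)
      ultimately have "b*(p$1)^2 + b*(p$2)^2 + (p$3)^2 \<le> b*(1 - (p$4)^2)"
        by linarith
      with g0 show "momentum b p \<in> {(x, g). 0 \<le> g \<and> g \<le> b * (1 - x^2)}"
        unfolding momentum_def Gpro_def l12_def l13_def l14_def l23_def by simp
    qed
  next
    show "{(x, g). 0 \<le> g \<and> g \<le> b * (1 - x^2)} \<subseteq> momentum b ` Mh (1/2)"
    proof clarify
      fix x g :: real assume g0: "0 \<le> g" and gb: "g \<le> b * (1 - x^2)"
      have q0: "0 \<le> g/b" using g0 b0 by simp
      have q1: "g/b \<le> 1 - x^2" using gb b0 by (simp add: divide_le_eq mult.commute)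
      define p where "p = mk6 (sqrt (g/b)) 0 0 x (sqrt (1 - x^2 - g/b)) 0"
      have "p \<in> Mh (1/2)"
        unfolding p_def Mh_def casimir_norm_def casimir_pf_def l12_def l13_def l14_def l23_def l24_def l34_def
        using q0 q1 by simp
      moreover have "momentum b p = (x, g)"
        unfolding p_def momentum_def Gpro_def l12_def l13_def l14_def l23_def
        using q0 b0 by simp
      ultimately show "(x, g) \<in> momentum b ` Mh (1/2)" by (metis image_eqI)
    qed
  qed
  show "isolated_critical_value b (1/2) (0, 1)"
    unfolding isolated_critical_value_def
  proof (intro conjI)
    define p0 where "p0 = mk6 0 0 1 0 0 0"
    have "critical_point b (1/2) p0"
      unfolding critical_point_def
    proof (intro conjI)
      show "p0 \<in> Mh (1/2)"
        unfolding p0_def Mh_def casimir_norm_def casimir_pf_def l12_def l13_def l14_def l23_def l24_def l34_def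
        by simp
      have DMe: "frechet_derivative (momentum b) (at p0) = (\<lambda>v. (v$4, 2*b*p0$1 * v$1 + 2*b*p0$2 * v$2 + 2*p0$3 * v$3))"
        by (rule frechet_derivative_at[OF hd_mom[of b p0], symmetric])
      have "(1, 0) \<notin> frechet_derivative (momentum b) (at p0) ` tangent_space p0"
        unfolding DMe tangent_eq by (auto simp: p0_def)
      then show "frechet_derivative (momentum b) (at p0) ` tangent_space p0 \<noteq> UNIV" by auto
    qed
    moreover have "momentum b p0 = (0, 1)"
      unfolding p0_def momentum_def Gpro_def l12_def l13_def l14_def l23_def by simp
    ultimately show "critical_value b (1/2) (0, 1)" unfolding critical_value_def by blast
    define e where "e = min (1/2) ((b-1)/(2*b))"
    have e0: "e > 0" unfolding e_def using assms by simp
    have e1: "e \<le> 1/2" unfolding e_def by simp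
    have e2: "e \<le> (b-1)/(2*b)" unfolding e_def by simp
    have e3: "b*e \<le> (b-1)/2" using e2 b0 by (simp add: le_divide_eq mult_ac)
    show "\<exists>e>0. \<forall>c'. c' \<noteq> (0, 1) \<and> dist c' (0, 1) < e \<longrightarrow> \<not> critical_value b (1/2) c'"
    proof (intro exI[of _ e] conjI allI impI e0)
      fix c' :: "real \<times> real"
      assume a: "c' \<noteq> (0, 1) \<and> dist c' (0, 1) < e"
      show "\<not> critical_value b (1/2) c'"
      proof
        assume "critical_value b (1/2) c'"
        then obtain p where cp: "critical_point b (1/2) p" and mp: "momentum b p = c'"
          unfolding critical_value_def by blast
        have c': "c' = (p$4, Gpro b p)" using mp unfolding momentum_def l23_def by simp
        have dx: "\<bar>p$4\<bar> < e"
          using dist_fst_le[of c' "(0,1)"] a unfolding c' by (simp add: dist_real_def)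
        have dg: "\<bar>Gpro b p - 1\<bar> < e"
          using dist_snd_le[of c' "(0,1)"] a unfolding c' by (simp add: dist_real_def)
        from crit_vals[OF assms cp] show False
        proof (elim disjE)
          assume "p$4 = 0 \<and> Gpro b p = 1" then show False using a c' by simp
        next
          assume "Gpro b p = 0" then show False using dg e1 by simp
        next
          assume G: "Gpro b p = b*(1-(p$4)^2)"
          have "\<bar>p$4\<bar> * \<bar>p$4\<bar> \<le> e*e" using dx by (intro mult_mono) auto
          then have "(p$4)^2 \<le> e*e" by (simp add: power2_eq_square)
          then have "b*(p$4)^2 \<le> b*e*e" using b0 by simp
          also have "\<dots> \<le> (b-1)/2 * e" using mult_right_mono[OF e3, of e] e0 by simp
          also have "\<dots> \<le> (b-1)/4" using mult_left_mono[OF e1, of "(b-1)/2"] assms by simp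
          finally have "b*(p$4)^2 \<le> (b-1)/4" .
          moreover have "b - 1 - b*(p$4)^2 < e" using dg G by (simp add: algebra_simps)
          moreover have "e \<le> b*e" using assms e0 by simp
          then have "e \<le> (b-1)/2" using e3 by linarith
          ultimately show False using assms by argo
        qed
      qed
    qed
  qed
qed

end
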